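(* Let $R$ be a commutative ring with identity and let $M$ be a non-zero comultiplication $R$-module. A submodule $N$ of $M$ is a large submodule of $M$ if and only if $\mathrm{Soc}(M)\subseteq N$.
   Context: An $R$-module $M$ is a comultiplication module if for every submodule $N$ of $M$ there is an ideal $I$ of $R$ with $N=\mathrm{Ann}_M(I)=\{m\in M: Im=0\}$. A submodule $N$ of $M$ is large (essential) in $M$ if $N\cap L\neq 0$ for every non-zero submodule $L$ of $M$. $\mathrm{Min}(M)$ denotes the set of minimal (i.e. simple) submodules of $M$, and $\mathrm{Soc}(M)$ denotes the sum of all minimal submodules of $M$. *)

theory Defs
  imports "HOL-Algebra.Module" "HOL-Algebra.Ideal"
begin

definition ann_mod :: "('a, 'c) ring_scheme \<Rightarrow> ('a, 'b, 'd) module_scheme \<Rightarrow> 'a set \<Rightarrow> 'b set" where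
  "ann_mod R M I = {m \<in> carrier M. \<forall>r\<in>I. r \<odot>\<^bsub>M\<^esub> m = \<zero>\<^bsub>M\<^esub>}"

definition comultiplication_module :: "('a, 'c) ring_scheme \<Rightarrow> ('a, 'b, 'd) module_scheme \<Rightarrow> bool" where
  "comultiplication_module R M \<longleftrightarrow> module R M \<and>
     (\<forall>N. submodule N R M \<longrightarrow> (\<exists>I. ideal I R \<and> N = ann_mod R M I))"

definition large_submodule :: "('a, 'c) ring_scheme \<Rightarrow> ('a, 'b, 'd) module_scheme \<Rightarrow> 'b set \<Rightarrow> bool" where
  "large_submodule R M N \<longleftrightarrow> submodule N R M \<and>
     (\<forall>L. submodule L R M \<longrightarrow> L \<noteq> {\<zero>\<^bsub>M\<^esub>} \<longrightarrow> N \<inter> L \<noteq> {\<zero>\<^bsub>M\<^esub>})"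

definition min_submodules :: "('a, 'c) ring_scheme \<Rightarrow> ('a, 'b, 'd) module_scheme \<Rightarrow> 'b set set" where
  "min_submodules R M = {L. submodule L R M \<and> L \<noteq> {\<zero>\<^bsub>M\<^esub>} \<and>
     (\<forall>K. submodule K R M \<longrightarrow> K \<subseteq> L \<longrightarrow> K = {\<zero>\<^bsub>M\<^esub>} \<or> K = L)}"

text \<open>Socle: the sum of all minimal submodules, i.e. the smallest submodule containing all of them
  (equal to the zero submodule if there are none).\<close>
definition socle :: "('a, 'c) ring_scheme \<Rightarrow> ('a, 'b, 'd) module_scheme \<Rightarrow> 'b set" where
  "socle R M = \<Inter>{K. submodule K R M \<and> \<Union>(min_submodules R M) \<subseteq> K}"

end

theory Submission
  imports Defs
begin


lemma (in ring) ideal_elemI: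
  assumes "I \<subseteq> carrier R" "I \<noteq> {}"
    "\<And>a. a \<in> I \<Longrightarrow> \<ominus> a \<in> I"
    "\<And>a b. a \<in> I \<Longrightarrow> b \<in> I \<Longrightarrow> a \<oplus> b \<in> I"
    "\<And>a x. a \<in> I \<Longrightarrow> x \<in> carrier R \<Longrightarrow> x \<otimes> a \<in> I"
    "\<And>a x. a \<in> I \<Longrightarrow> x \<in> carrier R \<Longrightarrow> a \<otimes> x \<in> I"
  shows "ideal I R"
  apply (rule idealI[OF ring_axioms])
    apply (rule add.subgroupI)
  using assms by (auto simp: a_inv_def)


lemma (in cring) exists_maximal:
  assumes A: "ideal A R" and one: "\<one> \<notin> A"
  shows "\<exists>P. maximalideal P R \<and> A \<subseteq> P"
proof -
  define S where "S = {I. ideal I R \<and> A \<subseteq> I \<and> \<one> \<notin> I}"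
  have "\<exists>P\<in>S. \<forall>X\<in>S. P \<subseteq> X \<longrightarrow> X = P"
  proof (rule subset_Zorn_nonempty)
    show "S \<noteq> {}" using A one S_def by auto
  next
    fix C assume C: "C \<noteq> {}" "subset.chain S C"
    have CS: "C \<subseteq> S" using C(2) unfolding pred_on.chain_def by auto
    have lin: "\<And>X Y. X \<in> C \<Longrightarrow> Y \<in> C \<Longrightarrow> X \<subseteq> Y \<or> Y \<subseteq> X"
      using C(2) unfolding pred_on.chain_def by auto
    have id: "\<And>X. X \<in> C \<Longrightarrow> ideal X R" using CS S_def by auto
    have ad: "\<And>X. X \<in> C \<Longrightarrow> additive_subgroup X R" using id ideal.axioms(1) by auto
    have "ideal (\<Union>C) R"
    proof (rule ideal_elemI)
      show "\<Union>C \<subseteq> carrier R" using id by (auto intro: ideal.Icarr)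
      obtain X where "X \<in> C" using C(1) by auto
      then have "\<zero> \<in> X" using additive_subgroup.zero_closed[OF ad] by auto
      then show "\<Union>C \<noteq> {}" using \<open>X \<in> C\<close> by auto
      show "\<ominus> a \<in> \<Union>C" if aC: "a \<in> \<Union>C" for a
      proof -
        obtain X where X: "X \<in> C" "a \<in> X" using aC by auto
        then have "\<ominus> a \<in> X" using additive_subgroup.a_inv_closed[OF ad[OF X(1)]] by auto
        then show ?thesis using X by auto
      qed
      show "a \<oplus> b \<in> \<Union>C" if aC: "a \<in> \<Union>C" "b \<in> \<Union>C" for a b
      proof -
        obtain X Y where XY: "X \<in> C" "Y \<in> C" "a \<in> X" "b \<in> Y" using aC by auto
        show ?thesis
        proof (cases "X \<subseteq> Y")
          case True then have "a \<oplus> b \<in> Y" using XY additive_subgroup.a_closed[OF ad[OF XY(2)]] by auto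
          then show ?thesis using XY by auto
        next
          case False then have "Y \<subseteq> X" using lin XY by auto
          then have "a \<oplus> b \<in> X" using XY additive_subgroup.a_closed[OF ad[OF XY(1)]] by auto
          then show ?thesis using XY by auto
        qed
      qed
      show "x \<otimes> a \<in> \<Union>C" if aC: "a \<in> \<Union>C" "x \<in> carrier R" for a x
      proof -
        obtain X where X: "X \<in> C" "a \<in> X" using aC by auto
        then have "x \<otimes> a \<in> X" using aC ideal.I_l_closed[OF id[OF X(1)]] by auto
        then show ?thesis using X by auto
      qed
      show "a \<otimes> x \<in> \<Union>C" if aC: "a \<in> \<Union>C" "x \<in> carrier R" for a x
      proof -
        obtain X where X: "X \<in> C" "a \<in> X" using aC by auto
        then have "a \<otimes> x \<in> X" using aC ideal.I_r_closed[OF id[OF X(1)]] by auto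
        then show ?thesis using X by auto
      qed
    qed
    moreover have "A \<subseteq> \<Union>C" using C CS S_def by auto
    moreover have "\<one> \<notin> \<Union>C" using CS S_def by auto
    ultimately show "\<Union>C \<in> S" using S_def by auto
  qed
  then obtain P where P: "P \<in> S" "\<And>X. X \<in> S \<Longrightarrow> P \<subseteq> X \<Longrightarrow> X = P" by auto
  have "maximalideal P R"
  proof (rule maximalidealI)
    show "ideal P R" using P S_def by auto
    show "carrier R \<noteq> P" using P S_def by auto
    fix J assume J: "ideal J R" "P \<subseteq> J" "J \<subseteq> carrier R"
    show "J = P \<or> J = carrier R"
    proof (cases "\<one> \<in> J")
      case True then show ?thesis using J ideal.one_imp_carrier by auto
    next
      case False then have "J \<in> S" using J P S_def by auto
      then show ?thesis using J P by auto
    qed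
  qed
  then show ?thesis using P S_def by auto
qed


context module
begin

lemma sub_zero: "submodule H R M \<Longrightarrow> \<zero>\<^bsub>M\<^esub> \<in> H"
  using subgroup.one_closed[OF submodule.axioms(1)] by fastforce

lemma sub_carr: "submodule H R M \<Longrightarrow> H \<subseteq> carrier M"
  using submoduleE(1) by blast

lemma sub_int: "submodule H R M \<Longrightarrow> submodule K R M \<Longrightarrow> submodule (H \<inter> K) R M"
  apply (rule submoduleI)
  using submoduleE[of H] submoduleE[of K] sub_zero[of H] sub_zero[of K] by auto

lemma ann_ideal:
  assumes x: "x \<in> carrier M"
  shows "ideal {r \<in> carrier R. r \<odot>\<^bsub>M\<^esub> x = \<zero>\<^bsub>M\<^esub>} R"
proof (rule R.ideal_elemI)
  show "{r \<in> carrier R. r \<odot>\<^bsub>M\<^esub> x = \<zero>\<^bsub>M\<^esub>} \<noteq> {}" using x by (auto intro!: exI[of _ \<zero>])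
  show "\<ominus> a \<in> {r \<in> carrier R. r \<odot>\<^bsub>M\<^esub> x = \<zero>\<^bsub>M\<^esub>}" if "a \<in> {r \<in> carrier R. r \<odot>\<^bsub>M\<^esub> x = \<zero>\<^bsub>M\<^esub>}" for a
    using that x smult_l_minus by auto
  show "a \<oplus> b \<in> {r \<in> carrier R. r \<odot>\<^bsub>M\<^esub> x = \<zero>\<^bsub>M\<^esub>}" if "a \<in> {r \<in> carrier R. r \<odot>\<^bsub>M\<^esub> x = \<zero>\<^bsub>M\<^esub>}" "b \<in> {r \<in> carrier R. r \<odot>\<^bsub>M\<^esub> x = \<zero>\<^bsub>M\<^esub>}" for a b
    using that x smult_l_distr by auto
  show "c \<otimes> a \<in> {r \<in> carrier R. r \<odot>\<^bsub>M\<^esub> x = \<zero>\<^bsub>M\<^esub>}" if "a \<in> {r \<in> carrier R. r \<odot>\<^bsub>M\<^esub> x = \<zero>\<^bsub>M\<^esub>}" "c \<in> carrier R" for a c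
    using that x smult_assoc1 by auto
  show "a \<otimes> c \<in> {r \<in> carrier R. r \<odot>\<^bsub>M\<^esub> x = \<zero>\<^bsub>M\<^esub>}" if "a \<in> {r \<in> carrier R. r \<odot>\<^bsub>M\<^esub> x = \<zero>\<^bsub>M\<^esub>}" "c \<in> carrier R" for a c
    using that x by (simp add: R.m_comm[of a c] smult_assoc1)
qed auto

lemma mult_sub:
  assumes P: "ideal P R" and x: "x \<in> carrier M"
  shows "submodule {p \<odot>\<^bsub>M\<^esub> x | p. p \<in> P} R M"
proof (rule submoduleI)
  have Pc: "P \<subseteq> carrier R" using P by (auto intro: ideal.Icarr)
  show "{p \<odot>\<^bsub>M\<^esub> x | p. p \<in> P} \<subseteq> carrier M" using Pc x by auto
  show "\<zero>\<^bsub>M\<^esub> \<in> {p \<odot>\<^bsub>M\<^esub> x | p. p \<in> P}"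
    using x additive_subgroup.zero_closed[OF ideal.axioms(1)[OF P]] by (auto intro!: exI[of _ \<zero>])
  show "\<ominus>\<^bsub>M\<^esub> a \<in> {p \<odot>\<^bsub>M\<^esub> x | p. p \<in> P}" if aa: "a \<in> {p \<odot>\<^bsub>M\<^esub> x | p. p \<in> P}" for a
  proof -
    obtain p where p: "p \<in> P" "a = p \<odot>\<^bsub>M\<^esub> x" using aa by auto
    have "\<ominus>\<^bsub>M\<^esub> a = (\<ominus> p) \<odot>\<^bsub>M\<^esub> x" using p Pc x smult_l_minus by auto
    moreover have "\<ominus> p \<in> P" using additive_subgroup.a_inv_closed[OF ideal.axioms(1)[OF P]] p by auto
    ultimately show ?thesis by auto
  qed
  show "a \<oplus>\<^bsub>M\<^esub> b \<in> {p \<odot>\<^bsub>M\<^esub> x | p. p \<in> P}" if aa: "a \<in> {p \<odot>\<^bsub>M\<^esub> x | p. p \<in> P}" "b \<in> {p \<odot>\<^bsub>M\<^esub> x | p. p \<in> P}" for a b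
  proof -
    obtain p q where p: "p \<in> P" "a = p \<odot>\<^bsub>M\<^esub> x" "q \<in> P" "b = q \<odot>\<^bsub>M\<^esub> x" using aa by auto
    have "a \<oplus>\<^bsub>M\<^esub> b = (p \<oplus> q) \<odot>\<^bsub>M\<^esub> x" using smult_l_distr[of p q x] p Pc x by (metis subsetD)
    moreover have "p \<oplus> q \<in> P" using additive_subgroup.a_closed[OF ideal.axioms(1)[OF P]] p by auto
    ultimately show ?thesis by auto
  qed
  show "c \<odot>\<^bsub>M\<^esub> a \<in> {p \<odot>\<^bsub>M\<^esub> x | p. p \<in> P}" if aa: "c \<in> carrier R" "a \<in> {p \<odot>\<^bsub>M\<^esub> x | p. p \<in> P}" for c a
  proof -
    obtain p where p: "p \<in> P" "a = p \<odot>\<^bsub>M\<^esub> x" using aa by auto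
    have "c \<odot>\<^bsub>M\<^esub> a = (c \<otimes> p) \<odot>\<^bsub>M\<^esub> x" using p Pc x aa smult_assoc1 by auto
    moreover have "c \<otimes> p \<in> P" using ideal.I_l_closed[OF P] p aa by auto
    ultimately show ?thesis by auto
  qed
qed

end


context module
begin

lemma key:
  assumes comult: "comultiplication_module R M" and x: "x \<in> carrier M" and x0: "x \<noteq> \<zero>\<^bsub>M\<^esub>"
  shows "\<exists>P r. maximalideal P R \<and> r \<in> carrier R \<and> r \<odot>\<^bsub>M\<^esub> x \<noteq> \<zero>\<^bsub>M\<^esub> \<and>
           (\<forall>p\<in>P. p \<odot>\<^bsub>M\<^esub> (r \<odot>\<^bsub>M\<^esub> x) = \<zero>\<^bsub>M\<^esub>)"
proof -
  define A where "A = {r \<in> carrier R. r \<odot>\<^bsub>M\<^esub> x = \<zero>\<^bsub>M\<^esub>}"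
  have A: "ideal A R" using ann_ideal[OF x] A_def by simp
  have "\<one> \<notin> A" using x x0 A_def by auto
  then obtain P where P: "maximalideal P R" "A \<subseteq> P" using R.exists_maximal[OF A] by auto
  have Pi: "ideal P R" using P(1) maximalideal.axioms(1) by blast
  have Pc: "P \<subseteq> carrier R" using Pi by (auto intro: ideal.Icarr)
  have one: "\<one> \<notin> P"
  proof
    assume "\<one> \<in> P"
    then have "P = carrier R" using ideal.one_imp_carrier[OF Pi] by blast
    then show False using maximalideal.I_notcarr[OF P(1)] by simp
  qed
  define Px where "Px = {p \<odot>\<^bsub>M\<^esub> x | p. p \<in> P}"
  have "submodule Px R M" using mult_sub[OF Pi x] Px_def by simp
  then obtain I where I: "ideal I R" "Px = ann_mod R M I"
    using comult unfolding comultiplication_module_def by blast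
  have xPx: "x \<notin> Px"
  proof
    assume "x \<in> Px"
    then obtain p where p: "p \<in> P" "x = p \<odot>\<^bsub>M\<^esub> x" using Px_def by auto
    have pc: "p \<in> carrier R" using p Pc by auto
    have "(\<one> \<ominus> p) \<odot>\<^bsub>M\<^esub> x = \<one> \<odot>\<^bsub>M\<^esub> x \<oplus>\<^bsub>M\<^esub> (\<ominus> p) \<odot>\<^bsub>M\<^esub> x"
      using pc x by (simp add: R.minus_eq smult_l_distr)
    also have "\<dots> = x \<oplus>\<^bsub>M\<^esub> \<ominus>\<^bsub>M\<^esub> x"
      using pc x p(2)[symmetric] smult_l_minus by auto
    also have "\<dots> = \<zero>\<^bsub>M\<^esub>" using x by (simp add: M.r_neg)
    finally have "\<one> \<ominus> p \<in> P" using P(2) A_def pc by auto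
    then have "(\<one> \<ominus> p) \<oplus> p \<in> P"
      using additive_subgroup.a_closed[OF ideal.axioms(1)[OF Pi]] p by auto
    moreover have "(\<one> \<ominus> p) \<oplus> p = \<one>" using pc by (simp add: R.minus_eq R.a_assoc R.l_neg)
    ultimately show False using one by simp
  qed
  then obtain r where r: "r \<in> I" "r \<odot>\<^bsub>M\<^esub> x \<noteq> \<zero>\<^bsub>M\<^esub>"
    using I(2) x unfolding ann_mod_def by auto
  have rc: "r \<in> carrier R" using r I(1) by (auto intro: ideal.Icarr)
  have "\<forall>p\<in>P. p \<odot>\<^bsub>M\<^esub> (r \<odot>\<^bsub>M\<^esub> x) = \<zero>\<^bsub>M\<^esub>"
  proof
    fix p assume p: "p \<in> P"
    have pc: "p \<in> carrier R" using p Pc by auto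
    have "p \<odot>\<^bsub>M\<^esub> x \<in> ann_mod R M I" using p Px_def I(2) by auto
    then have "r \<odot>\<^bsub>M\<^esub> (p \<odot>\<^bsub>M\<^esub> x) = \<zero>\<^bsub>M\<^esub>" using r unfolding ann_mod_def by auto
    moreover have "p \<odot>\<^bsub>M\<^esub> (r \<odot>\<^bsub>M\<^esub> x) = r \<odot>\<^bsub>M\<^esub> (p \<odot>\<^bsub>M\<^esub> x)"
      using pc rc x by (simp add: smult_assoc1[symmetric] R.m_comm[of p r])
    ultimately show "p \<odot>\<^bsub>M\<^esub> (r \<odot>\<^bsub>M\<^esub> x) = \<zero>\<^bsub>M\<^esub>" by simp
  qed
  then show ?thesis using P(1) rc r(2) by (intro exI[of _ P] exI[of _ r]) simp
qed

lemma simple: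
  assumes P: "maximalideal P R" and y: "y \<in> carrier M" and y0: "y \<noteq> \<zero>\<^bsub>M\<^esub>"
    and ann: "\<forall>p\<in>P. p \<odot>\<^bsub>M\<^esub> y = \<zero>\<^bsub>M\<^esub>"
  shows "{r \<odot>\<^bsub>M\<^esub> y | r. r \<in> carrier R} \<in> min_submodules R M"
proof -
  define Ry where "Ry = {r \<odot>\<^bsub>M\<^esub> y | r. r \<in> carrier R}"
  have Pi: "ideal P R" using P maximalideal.axioms(1) by blast
  have Pc: "P \<subseteq> carrier R" using Pi by (auto intro: ideal.Icarr)
  have sub: "submodule Ry R M" using mult_sub[OF R.oneideal y] Ry_def by simp
  have yRy: "y \<in> Ry" using Ry_def y by (auto intro!: exI[of _ \<one>])
  have "Ry \<noteq> {\<zero>\<^bsub>M\<^esub>}" using yRy y0 by auto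
  moreover have "K = {\<zero>\<^bsub>M\<^esub>} \<or> K = Ry" if K: "submodule K R M" "K \<subseteq> Ry" for K
  proof (cases "K = {\<zero>\<^bsub>M\<^esub>}")
    case True then show ?thesis by simp
  next
    case False
    then obtain k where k: "k \<in> K" "k \<noteq> \<zero>\<^bsub>M\<^esub>" using sub_zero[OF K(1)] by auto
    then obtain s where s: "s \<in> carrier R" "k = s \<odot>\<^bsub>M\<^esub> y" using K(2) Ry_def by auto
    have sP: "s \<notin> P" using s k ann by auto
    define J where "J = set_add R P (PIdl s)"
    have Ji: "ideal J R" unfolding J_def using R.add_ideals[OF Pi R.cgenideal_ideal[OF s(1)]] .
    have PJ: "P \<subseteq> J"
    proof
      fix p assume p: "p \<in> P"
      then have "p = p \<oplus> \<zero> \<otimes> s" using Pc s by auto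
      moreover have "\<zero> \<otimes> s \<in> PIdl s" unfolding cgenideal_def by auto
      ultimately show "p \<in> J" unfolding J_def set_add_def' using p by blast
    qed
    have "s = \<zero> \<oplus> \<one> \<otimes> s" using s by auto
    moreover have "\<one> \<otimes> s \<in> PIdl s" unfolding cgenideal_def by auto
    moreover have "\<zero> \<in> P" using additive_subgroup.zero_closed[OF ideal.axioms(1)[OF Pi]] .
    ultimately have "s \<in> J" unfolding J_def set_add_def' by blast
    then have "J \<noteq> P" using sP by auto
    then have "J = carrier R"
      using maximalideal.I_maximal[OF P Ji PJ] ideal.Icarr[OF Ji] by blast
    then have "\<one> \<in> J" by simp
    then obtain p t where pt: "p \<in> P" "t \<in> carrier R" "\<one> = p \<oplus> t \<otimes> s"
      unfolding J_def set_add_def' cgenideal_def by blast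
    have "y = \<one> \<odot>\<^bsub>M\<^esub> y" using y by simp
    also have "\<dots> = p \<odot>\<^bsub>M\<^esub> y \<oplus>\<^bsub>M\<^esub> (t \<otimes> s) \<odot>\<^bsub>M\<^esub> y"
      using pt Pc s y smult_l_distr by auto
    also have "\<dots> = t \<odot>\<^bsub>M\<^esub> k" using pt ann s y smult_assoc1 by auto
    finally have "y \<in> K" using submodule.smult_closed[OF K(1) pt(2) k(1)] by simp
    then have "Ry \<subseteq> K" using Ry_def submodule.smult_closed[OF K(1)] by auto
    then show ?thesis using K by auto
  qed
  ultimately show ?thesis using sub unfolding min_submodules_def Ry_def by auto
qed

end


theorem lemma2p2:
  fixes R :: "('a, 'c) ring_scheme" and M :: "('a, 'b, 'd) module_scheme" and N :: "'b set"
  assumes "cring R"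
    and "module R M"
    and "comultiplication_module R M"
    and "carrier M \<noteq> {\<zero>\<^bsub>M\<^esub>}"
    and "submodule N R M"
  shows "large_submodule R M N \<longleftrightarrow> socle R M \<subseteq> N"
proof
  interpret module R M by fact
  assume lg: "large_submodule R M N"
  have "\<Union>(min_submodules R M) \<subseteq> N"
  proof
    fix z assume "z \<in> \<Union>(min_submodules R M)"
    then obtain L where L: "L \<in> min_submodules R M" "z \<in> L" by auto
    have Ls: "submodule L R M" "L \<noteq> {\<zero>\<^bsub>M\<^esub>}" using L(1) unfolding min_submodules_def by auto
    have "submodule (N \<inter> L) R M" using sub_int[OF assms(5) Ls(1)] .
    then have "N \<inter> L = {\<zero>\<^bsub>M\<^esub>} \<or> N \<inter> L = L" using L(1) unfolding min_submodules_def by auto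
    moreover have "N \<inter> L \<noteq> {\<zero>\<^bsub>M\<^esub>}" using lg Ls unfolding large_submodule_def by auto
    ultimately have "L \<subseteq> N" by auto
    then show "z \<in> N" using L(2) by auto
  qed
  then show "socle R M \<subseteq> N" unfolding socle_def using assms(5) by (intro Inter_lower) simp
next
  interpret module R M by fact
  assume soc: "socle R M \<subseteq> N"
  have "N \<inter> L \<noteq> {\<zero>\<^bsub>M\<^esub>}" if L: "submodule L R M" "L \<noteq> {\<zero>\<^bsub>M\<^esub>}" for L
  proof -
    obtain x where x: "x \<in> L" "x \<noteq> \<zero>\<^bsub>M\<^esub>" using L sub_zero[OF L(1)] by auto
    have xc: "x \<in> carrier M" using x(1) sub_carr[OF L(1)] by auto
    obtain P r where Pr: "maximalideal P R" "r \<in> carrier R" "r \<odot>\<^bsub>M\<^esub> x \<noteq> \<zero>\<^bsub>M\<^esub>"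
      "\<forall>p\<in>P. p \<odot>\<^bsub>M\<^esub> (r \<odot>\<^bsub>M\<^esub> x) = \<zero>\<^bsub>M\<^esub>"
      using key[OF assms(3) xc x(2)] by blast
    define y where "y = r \<odot>\<^bsub>M\<^esub> x"
    have yL: "y \<in> L" using submodule.smult_closed[OF L(1) Pr(2) x(1)] y_def by simp
    have yc: "y \<in> carrier M" using yL sub_carr[OF L(1)] by auto
    have mn: "{s \<odot>\<^bsub>M\<^esub> y | s. s \<in> carrier R} \<in> min_submodules R M"
      using simple[OF Pr(1) yc] Pr(3,4) y_def by simp
    have "y \<in> {s \<odot>\<^bsub>M\<^esub> y | s. s \<in> carrier R}" using yc by (auto intro!: exI[of _ "\<one>\<^bsub>R\<^esub>"])
    then have "y \<in> \<Union>(min_submodules R M)" using mn by blast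
    then have "y \<in> socle R M" unfolding socle_def by blast
    then have "y \<in> N \<inter> L" using soc yL by auto
    then show ?thesis using Pr(3) y_def by auto
  qed
  then show "large_submodule R M N" unfolding large_submodule_def using assms(5) by auto
qed
end
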